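(* For every integer $n \geq 1$ there is an MSyDS $\mathcal{S}_n$ with two layers and $n$ nodes, in which every local function is a threshold function and every master function is a symmetric Boolean function, such that: the phase space of $\mathcal{S}_n$ contains exactly one cycle, this cycle has length $n+1$, and every transient has length one (i.e., every configuration not on this cycle has its successor on the cycle).
   Context: A multilayer synchronous dynamical system (MSyDS) $\mathcal{S}$ over $\mathbb{B}=\{0,1\}$ with $k\ge 1$ layers consists of: a finite node set $V$ with $n$ nodes; undirected simple graphs $G_i=(V,E_i)$, $1\le i\le k$ (all layers share the node set $V$, edge sets may differ); for each layer $i$ and node $v$ a local function $f_{i,v}$ with output in $\mathbb{B}$ whose inputs are the states of the nodes in the closed neighborhood of $v$ in $G_i$ (namely $v$ and its neighbors in $G_i$); and for each node $v$ a master function $\psi_v:\mathbb{B}^k\to\mathbb{B}$. A configuration is a map $\mathcal{C}:V\to\mathbb{B}$. The successor of $\mathcal{C}$ is the configuration $\mathcal{C}'$ with $\mathcal{C}'(v)=\psi_v(f_{1,v}(\mathcal{C}),\dots,f_{k,v}(\mathcal{C}))$ for every $v$ (synchronous update), where $f_{i,v}(\mathcal{C})$ denotes $f_{i,v}$ evaluated on the states in $\mathcal{C}$ of the closed neighborhood of $v$ in $G_i$. The phase space of $\mathcal{S}$ is the directed graph whose vertices are the $2^n$ configurations, with an arc from each configuration to its successor. A transient is a directed path in the phase space leading to a cycle. For an integer $\tau\ge 0$, the $\tau$-threshold function is the Boolean function that equals 1 iff at least $\tau$ of its inputs equal 1; a threshold function is a $\tau$-threshold function for some $\tau\ge0$.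 A Boolean function is symmetric if its value depends only on the number of 1's among its inputs. *)

theory Defs
  imports Main
begin

text \<open>Nodes are a finite set V of naturals; configurations are maps V -> bool,
  represented as functions nat => bool that are False outside V.\<close>

definition configs :: "nat set \<Rightarrow> (nat \<Rightarrow> bool) set" where
  "configs V = {C. \<forall>v. v \<notin> V \<longrightarrow> \<not> C v}"

definition simple_graph :: "nat set \<Rightarrow> (nat \<Rightarrow> nat \<Rightarrow> bool) \<Rightarrow> bool" where
  "simple_graph V E = (\<forall>u v. E u v \<longrightarrow> u \<in> V \<and> v \<in> V \<and> u \<noteq> v \<and> E v u)"

definition closed_nbhd :: "nat set \<Rightarrow> (nat \<Rightarrow> nat \<Rightarrow> bool) \<Rightarrow> nat \<Rightarrow> nat set" where
  "closed_nbhd V E v = {u \<in> V. u = v \<or> E v u}"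

definition is_local_fn :: "nat set \<Rightarrow> (nat \<Rightarrow> nat \<Rightarrow> bool) \<Rightarrow> nat \<Rightarrow> ((nat \<Rightarrow> bool) \<Rightarrow> bool) \<Rightarrow> bool" where
  "is_local_fn V E v g = (\<forall>C\<in>configs V. \<forall>C'\<in>configs V.
      (\<forall>u\<in>closed_nbhd V E v. C u = C' u) \<longrightarrow> g C = g C')"

definition threshold_local :: "nat set \<Rightarrow> (nat \<Rightarrow> nat \<Rightarrow> bool) \<Rightarrow> nat \<Rightarrow> ((nat \<Rightarrow> bool) \<Rightarrow> bool) \<Rightarrow> bool" where
  "threshold_local V E v g = (\<exists>\<tau>::nat. \<forall>C\<in>configs V.
      g C = (\<tau> \<le> card {u \<in> closed_nbhd V E v. C u}))"

definition symmetric_bool :: "nat \<Rightarrow> (bool list \<Rightarrow> bool) \<Rightarrow> bool" where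
  "symmetric_bool k \<psi> = (\<forall>xs ys. length xs = k \<longrightarrow> length ys = k \<longrightarrow>
      count_list xs True = count_list ys True \<longrightarrow> \<psi> xs = \<psi> ys)"

text \<open>An MSyDS with node set V, k layers with graphs E i, local functions f i v and
  master functions psi v (applied to the list [f 0 v C, ..., f (k-1) v C]).\<close>
definition is_msyds :: "nat set \<Rightarrow> nat \<Rightarrow> (nat \<Rightarrow> nat \<Rightarrow> nat \<Rightarrow> bool)
    \<Rightarrow> (nat \<Rightarrow> nat \<Rightarrow> (nat \<Rightarrow> bool) \<Rightarrow> bool) \<Rightarrow> (nat \<Rightarrow> bool list \<Rightarrow> bool) \<Rightarrow> bool" where
  "is_msyds V k E f \<psi> = (finite V \<and> 1 \<le> k \<and>
     (\<forall>i<k. simple_graph V (E i)) \<and>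
     (\<forall>i<k. \<forall>v\<in>V. is_local_fn V (E i) v (f i v)))"

definition msyds_step :: "nat set \<Rightarrow> nat \<Rightarrow> (nat \<Rightarrow> nat \<Rightarrow> (nat \<Rightarrow> bool) \<Rightarrow> bool)
    \<Rightarrow> (nat \<Rightarrow> bool list \<Rightarrow> bool) \<Rightarrow> (nat \<Rightarrow> bool) \<Rightarrow> (nat \<Rightarrow> bool)" where
  "msyds_step V k f \<psi> C = (\<lambda>v. if v \<in> V then \<psi> v (map (\<lambda>i. f i v C) [0..<k]) else False)"

definition cyclic_configs :: "nat set \<Rightarrow> ((nat \<Rightarrow> bool) \<Rightarrow> (nat \<Rightarrow> bool)) \<Rightarrow> (nat \<Rightarrow> bool) set" where
  "cyclic_configs V step = {C \<in> configs V. \<exists>p>0. (step ^^ p) C = C}"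

end

theory Submission
  imports Defs
begin

definition Dc :: "nat \<Rightarrow> nat \<Rightarrow> bool" where "Dc j = (\<lambda>v. v < j)"
definition nx :: "nat \<Rightarrow> nat \<Rightarrow> nat" where "nx n k = (if k < n then k + 1 else 0)"
definition fE :: "nat \<Rightarrow> nat \<Rightarrow> nat \<Rightarrow> nat \<Rightarrow> bool" where
  "fE n i u v = (u < n \<and> v < n \<and> u \<noteq> v)"
definition cnt :: "nat \<Rightarrow> (nat \<Rightarrow> bool) \<Rightarrow> nat" where
  "cnt n C = card {u \<in> {0..<n}. C u}"
definition ff :: "nat \<Rightarrow> nat \<Rightarrow> nat \<Rightarrow> (nat \<Rightarrow> bool) \<Rightarrow> bool" where
  "ff n i v C = (if i = 0 then v \<le> cnt n C else n \<le> cnt n C)"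
definition ps :: "nat \<Rightarrow> bool list \<Rightarrow> bool" where "ps v xs = (xs!0 \<noteq> xs!1)"

lemma cnt_le: "cnt n C \<le> n"
proof -
  have "card {u \<in> {0..<n}. C u} \<le> card {0..<n}" by (rule card_mono) auto
  then show ?thesis by (simp add: cnt_def)
qed

lemma cnt_D: "j \<le> n \<Longrightarrow> cnt n (Dc j) = j"
proof -
  assume "j \<le> n"
  then have "{u \<in> {0..<n}. Dc j u} = {0..<j}" by (auto simp: Dc_def)
  then show ?thesis by (simp add: cnt_def)
qed

lemma nbhd: "v < n \<Longrightarrow> closed_nbhd {0..<n} (fE n i) v = {0..<n}"
  by (auto simp: closed_nbhd_def fE_def)

lemma step_eq: "msyds_step {0..<n} 2 (ff n) ps C = Dc (nx n (cnt n C))"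
proof -
  have "cnt n C \<le> n" by (rule cnt_le)
  then show ?thesis
    by (auto simp: msyds_step_def ps_def ff_def Dc_def nx_def fun_eq_iff numeral_2_eq_2)
qed

lemma nx_mod: "j \<le> n \<Longrightarrow> nx n j = (j + 1) mod (n + 1)"
  by (auto simp: nx_def)

lemma iter: "j \<le> n \<Longrightarrow> (msyds_step {0..<n} 2 (ff n) ps ^^ p) (Dc j) = Dc ((j + p) mod (n + 1))"
proof (induction p)
  case 0 then show ?case by simp
next
  case (Suc p)
  have le: "(j + p) mod (n + 1) \<le> n"
    by (metis less_Suc_eq_le mod_less_divisor Suc_eq_plus1 zero_less_Suc)
  have "(msyds_step {0..<n} 2 (ff n) ps ^^ Suc p) (Dc j)
     = msyds_step {0..<n} 2 (ff n) ps ((msyds_step {0..<n} 2 (ff n) ps ^^ p) (Dc j))" by simp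
  also have "\<dots> = msyds_step {0..<n} 2 (ff n) ps (Dc ((j + p) mod (n + 1)))" using Suc by simp
  also have "\<dots> = Dc (nx n ((j + p) mod (n + 1)))"
    by (simp only: step_eq cnt_D[OF le])
  also have "nx n ((j + p) mod (n + 1)) = (j + Suc p) mod (n + 1)"
    using nx_mod[OF le] by (simp add: mod_Suc_eq)
  finally show ?case .
qed

lemma D_conf: "j \<le> n \<Longrightarrow> Dc j \<in> configs {0..<n}"
  by (auto simp: configs_def Dc_def)

lemma D_inj: "inj_on Dc {0..n}"
proof (rule inj_onI)
  fix a b :: nat assume "Dc a = Dc b"
  then have "\<forall>v. (v < a) = (v < b)" by (simp add: Dc_def fun_eq_iff)
  then show "a = b" by (metis less_irrefl nat_neq_iff)
qed

lemma nx_le: "nx n k \<le> n" by (auto simp: nx_def)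

lemma cyc: "cyclic_configs {0..<n} (msyds_step {0..<n} 2 (ff n) ps) = Dc ` {0..n}"
proof
  show "cyclic_configs {0..<n} (msyds_step {0..<n} 2 (ff n) ps) \<subseteq> Dc ` {0..n}"
  proof
    fix C assume "C \<in> cyclic_configs {0..<n} (msyds_step {0..<n} 2 (ff n) ps)"
    then obtain p where p: "p > 0" "(msyds_step {0..<n} 2 (ff n) ps ^^ p) C = C"
      by (auto simp: cyclic_configs_def)
    then obtain q where "p = Suc q" by (cases p) auto
    then have "C = msyds_step {0..<n} 2 (ff n) ps ((msyds_step {0..<n} 2 (ff n) ps ^^ q) C)"
      using p by simp
    then show "C \<in> Dc ` {0..n}" using nx_le by (simp add: step_eq)
  qed
next
  show "Dc ` {0..n} \<subseteq> cyclic_configs {0..<n} (msyds_step {0..<n} 2 (ff n) ps)"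
  proof
    fix C assume "C \<in> Dc ` {0..n}"
    then obtain j where j: "j \<le> n" "C = Dc j" by auto
    have "(msyds_step {0..<n} 2 (ff n) ps ^^ (n + 1)) C = C"
    proof -
      have "(j + (n + 1)) mod (n + 1) = j" using j(1) by (metis mod_add_self2 mod_less le_imp_less_Suc Suc_eq_plus1)
      then show ?thesis using j iter[OF j(1), of "n+1"] by simp
    qed
    then show "C \<in> cyclic_configs {0..<n} (msyds_step {0..<n} 2 (ff n) ps)"
      using j D_conf by (auto simp: cyclic_configs_def intro!: exI[of _ "n+1"])
  qed
qed

lemma rng: "range (\<lambda>j. (msyds_step {0..<n} 2 (ff n) ps ^^ j) (Dc 0)) = Dc ` {0..n}"
proof -
  have "range (\<lambda>j. (msyds_step {0..<n} 2 (ff n) ps ^^ j) (Dc 0)) = range (\<lambda>j. Dc (j mod (n+1)))"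
    by (simp add: iter)
  also have "\<dots> = Dc ` {0..n}"
  proof
    show "range (\<lambda>j. Dc (j mod (n+1))) \<subseteq> Dc ` {0..n}"
      by (auto simp: less_Suc_eq_le[symmetric])
    show "Dc ` {0..n} \<subseteq> range (\<lambda>j. Dc (j mod (n+1)))"
    proof
      fix x assume "x \<in> Dc ` {0..n}"
      then obtain j where "j \<le> n" "x = Dc j" by auto
      then show "x \<in> range (\<lambda>j. Dc (j mod (n+1)))"
        by (intro image_eqI[of _ _ j]) auto
    qed
  qed
  finally show ?thesis .
qed

lemma sym2: "symmetric_bool 2 (ps v)"
  unfolding symmetric_bool_def ps_def
proof (intro allI impI)
  fix xs ys :: "bool list"
  assume "length xs = 2" "length ys = 2" "count_list xs True = count_list ys True"
  then show "(xs ! 0 \<noteq> xs ! 1) = (ys ! 0 \<noteq> ys ! 1)"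
    by (cases xs rule: list.exhaust; cases ys rule: list.exhaust; auto simp: numeral_2_eq_2 length_Suc_conv split: if_splits)
qed

theorem theorem3p1:
  fixes n :: nat
  assumes "n \<ge> 1"
  shows "\<exists>E f \<psi>. is_msyds {0..<n} 2 E f \<psi>
    \<and> (\<forall>i<2. \<forall>v\<in>{0..<n}. threshold_local {0..<n} (E i) v (f i v))
    \<and> (\<forall>v\<in>{0..<n}. symmetric_bool 2 (\<psi> v))
    \<and> (\<exists>C0\<in>cyclic_configs {0..<n} (msyds_step {0..<n} 2 f \<psi>).
          cyclic_configs {0..<n} (msyds_step {0..<n} 2 f \<psi>)
            = range (\<lambda>j. (msyds_step {0..<n} 2 f \<psi> ^^ j) C0))
    \<and> card (cyclic_configs {0..<n} (msyds_step {0..<n} 2 f \<psi>)) = n + 1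
    \<and> (\<forall>C\<in>configs {0..<n}. msyds_step {0..<n} 2 f \<psi> C
          \<in> cyclic_configs {0..<n} (msyds_step {0..<n} 2 f \<psi>))"
proof (intro exI conjI)
  show "is_msyds {0..<n} 2 (fE n) (ff n) ps"
    unfolding is_msyds_def
  proof (intro conjI allI impI ballI)
    fix i :: nat show "simple_graph {0..<n} (fE n i)"
      by (auto simp: simple_graph_def fE_def)
  next
    fix i v assume "v \<in> {0..<n}"
    then show "is_local_fn {0..<n} (fE n i) v (ff n i v)"
      unfolding is_local_fn_def
    proof (intro ballI impI)
      fix C C' :: "nat \<Rightarrow> bool" assume "\<forall>u\<in>closed_nbhd {0..<n} (fE n i) v. C u = C' u"
      then have "\<forall>u\<in>{0..<n}. C u = C' u" using \<open>v \<in> {0..<n}\<close> by (simp add: nbhd)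
      then have "{u \<in> {0..<n}. C u} = {u \<in> {0..<n}. C' u}" by auto
      then show "ff n i v C = ff n i v C'" by (simp add: ff_def cnt_def)
    qed
  qed auto
  show "\<forall>i<2. \<forall>v\<in>{0..<n}. threshold_local {0..<n} (fE n i) v (ff n i v)"
  proof (intro allI impI ballI)
    fix i v :: nat assume "v \<in> {0..<n}"
    then show "threshold_local {0..<n} (fE n i) v (ff n i v)"
      unfolding threshold_local_def
      by (cases "i = 0") (auto simp: nbhd ff_def cnt_def)
  qed
  show "\<forall>v\<in>{0..<n}. symmetric_bool 2 (ps v)" using sym2 by blast
  show "\<exists>C0\<in>cyclic_configs {0..<n} (msyds_step {0..<n} 2 (ff n) ps).
          cyclic_configs {0..<n} (msyds_step {0..<n} 2 (ff n) ps)
            = range (\<lambda>j. (msyds_step {0..<n} 2 (ff n) ps ^^ j) C0)"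
    by (rule bexI[of _ "Dc 0"]) (auto simp: cyc rng)
  show "card (cyclic_configs {0..<n} (msyds_step {0..<n} 2 (ff n) ps)) = n + 1"
    by (simp add: cyc card_image[OF D_inj])
  show "\<forall>C\<in>configs {0..<n}. msyds_step {0..<n} 2 (ff n) ps C
          \<in> cyclic_configs {0..<n} (msyds_step {0..<n} 2 (ff n) ps)"
    by (auto simp: cyc step_eq nx_le)
qed

end
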